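(* Let $\Sigma$ be an alphabet with at least two letters, $k\ge1$, and $f\colon(\Sigma^* )^k\to\Sigma^*$ RCP. If there are $u_1,\ldots,u_k\in\Sigma^*$, all different from $\varepsilon$, with $f(u_1,\ldots,u_k)=\varepsilon$, then $f(x_1,\ldots,x_k)=\varepsilon$ for all $x_1,\ldots,x_k\in\Sigma^*$.
   Context: $\Sigma^*$ is the free monoid over $\Sigma$ (finite words, concatenation, empty word $\varepsilon$). A function $f\colon(\Sigma^* )^k\to\Sigma^*$ is RCP if for every monoid morphism $\varphi\colon\Sigma^*\to\Sigma^*$ and all $u_1,\ldots,u_k,v_1,\ldots,v_k$ with $\varphi(u_i)=\varphi(v_i)$ for all $i$, we have $\varphi(f(u_1,\ldots,u_k))=\varphi(f(v_1,\ldots,v_k))$. *)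

theory Defs
  imports Main
begin

definition monoid_morphism :: "('a list \<Rightarrow> 'a list) \<Rightarrow> bool" where
  "monoid_morphism \<phi> \<longleftrightarrow> \<phi> [] = [] \<and> (\<forall>u v. \<phi> (u @ v) = \<phi> u @ \<phi> v)"

text \<open>A k-ary function on words is represented as a function on lists of words;
  only its values on argument lists of length k matter.\<close>
definition RCP :: "nat \<Rightarrow> ('a list list \<Rightarrow> 'a list) \<Rightarrow> bool" where
  "RCP k f \<longleftrightarrow> (\<forall>\<phi> us vs. monoid_morphism \<phi> \<longrightarrow> length us = k \<longrightarrow> length vs = k \<longrightarrow>
      (\<forall>i<k. \<phi> (us ! i) = \<phi> (vs ! i)) \<longrightarrow> \<phi> (f us) = \<phi> (f vs))"

end

theory Submission
  imports Defs
begin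

lemma rcpD:
  assumes "RCP k f" "monoid_morphism \<phi>" "length us = k" "length vs = k"
    "\<And>i. i<k \<Longrightarrow> \<phi> (us ! i) = \<phi> (vs ! i)"
  shows "\<phi> (f us) = \<phi> (f vs)"
  using assms unfolding RCP_def by blast

lemma mm_map: "monoid_morphism (map g)"
  unfolding monoid_morphism_def by simp

lemma mm_concat: "monoid_morphism (\<lambda>x. concat (map h x))"
  unfolding monoid_morphism_def by simp

lemma mm_filter: "monoid_morphism (filter P)"
  unfolding monoid_morphism_def by simp

lemma len_eq:
  assumes "RCP k f" "length us = k" "length vs = k"
    "\<And>i. i<k \<Longrightarrow> length (us ! i) = length (vs ! i)"
  shows "length (f us) = length (f vs)"
proof -
  fix a :: 'a
  have "map (\<lambda>_. a) (f us) = map (\<lambda>_. a) (f vs)"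
    by (rule rcpD[OF assms(1) mm_map assms(2,3)]) (simp add: assms(4) map_replicate_const)
  then show ?thesis by (metis length_map)
qed

theorem mainTheorem14:
  fixes f :: "'a::finite list list \<Rightarrow> 'a list" and k :: nat
  assumes "card (UNIV :: 'a set) \<ge> 2"
    and "k \<ge> 1"
    and "RCP k f"
    and "length us = k" and "\<forall>i<k. us ! i \<noteq> []" and "f us = []"
  shows "\<forall>xs. length xs = k \<longrightarrow> f xs = []"
proof -
  obtain a b :: 'a where ab: "a \<noteq> b"
  proof -
    have "\<not> (\<forall>x y :: 'a. x = y)"
    proof
      assume "\<forall>x y :: 'a. x = y"
      then have "(UNIV :: 'a set) = {undefined}" by auto
      then have "card (UNIV :: 'a set) = card {undefined::'a}" by (rule arg_cong)
      then have "card (UNIV :: 'a set) \<le> 1" by simp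
      with assms(1) show False by simp
    qed
    then show ?thesis using that by blast
  qed
  define L where "L i = length (us ! i)" for i
  have Lpos: "i < k \<Longrightarrow> L i \<ge> 1" for i using assms(5) by (simp add: L_def Suc_le_eq)
  define R where "R c = map (\<lambda>i. replicate (L i + c) a) [0..<k]" for c
  have lenR: "length (R c) = k" for c by (simp add: R_def)
  have R0: "f (R c) = []" if "length vs = k" "\<And>i. i < k \<Longrightarrow> length (vs ! i) = L i + c"
     "f vs = []" for c vs
  proof -
    have "length (f (R c)) = length (f vs)"
      by (rule len_eq[OF assms(3) lenR that(1)]) (simp add: R_def that(2))
    then show ?thesis using that(3) by simp
  qed
  have RC: "f (R c) = []" for c
  proof (induction c)
    case 0
    show ?case by (rule R0[OF assms(4) _ assms(6)]) (simp add: L_def)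
  next
    case (Suc c)
    define h where "h x = (if x = b then [a,a] else [a])" for x
    define z where "z = map (\<lambda>i. b # replicate (L i + c - 1) a) [0..<k]"
    have fz: "f z = []"
    proof -
      have "length (f z) = length (f (R c))"
      proof (rule len_eq[OF assms(3)])
        fix i assume i: "i < k"
        have "L i \<ge> 1" using Lpos[OF i] .
        then show "length (z ! i) = length (R c ! i)" using i by (simp add: z_def R_def)
      qed (simp_all add: z_def lenR)
      then show ?thesis using Suc by simp
    qed
    have hi: "concat (map h (replicate n a)) = replicate n a" for n
      using ab by (induction n) (auto simp: h_def)
    have "concat (map h (f (R (Suc c)))) = concat (map h (f z))"
    proof (rule rcpD[OF assms(3) mm_concat lenR])
      show "length z = k" by (simp add: z_def)
      fix i assume i: "i < k"
      have "L i + c \<ge> 1" using Lpos[OF i] by simp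
      then obtain m where m: "L i + c = Suc m" by (cases "L i + c") auto
      have "R (Suc c) ! i = replicate (Suc (Suc m)) a" using i m by (simp add: R_def)
      moreover have "z ! i = b # replicate m a" using i m by (simp add: z_def)
      ultimately show "concat (map h (R (Suc c) ! i)) = concat (map h (z ! i))"
        using ab by (simp only: hi) (simp add: h_def hi)
    qed
    then have "concat (map h (f (R (Suc c)))) = []" using fz by simp
    moreover have "h x \<noteq> []" for x by (simp add: h_def)
    ultimately show ?case by (cases "f (R (Suc c))") auto
  qed
  have erase: "filter (\<lambda>x. x \<noteq> d) (f xs) = []" if "length xs = k" for xs d
  proof -
    define c where "c = sum_list (map length xs)"
    define v where "v = map (\<lambda>i. xs ! i @ replicate (L i + c - length (xs ! i)) d) [0..<k]"
    have le: "i < k \<Longrightarrow> length (xs ! i) \<le> c" for i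
    proof -
      assume "i < k"
      then have "map length xs ! i = length (xs ! i)" "i < length (map length xs)" using that by auto
      then show ?thesis unfolding c_def by (metis elem_le_sum_list)
    qed
    have fv: "f v = []"
    proof -
      have "length (f v) = length (f (R c))"
      proof (rule len_eq[OF assms(3)])
        fix i assume i: "i < k"
        have "length (xs ! i) \<le> c" using le[OF i] .
        then show "length (v ! i) = length (R c ! i)" using i by (simp add: v_def R_def)
      qed (simp_all add: v_def lenR)
      then show ?thesis using RC by simp
    qed
    have "filter (\<lambda>x. x \<noteq> d) (f xs) = filter (\<lambda>x. x \<noteq> d) (f v)"
      by (rule rcpD[OF assms(3) mm_filter that]) (auto simp: v_def)
    then show ?thesis using fv by simp
  qed
  show ?thesis
  proof (intro allI impI)
    fix xs :: "'a list list" assume xk: "length xs = k"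
    from erase[of xs a] erase[of xs b] xk ab
    show "f xs = []"
      by (cases "f xs") (auto split: if_splits)
  qed
qed

end
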